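(* For every $\alpha\ge1$, the function $E_{\alpha}^{*}(\cdot)$ on edge streams is $2$-almost-smooth.
   Context: Let $S=(e_1,\ldots,e_k)$ be a sequence of edges on vertex set $V=[n]$. An edge $e_i=\{u,v\}$ is $\alpha$-good with respect to $S$ if $d_i(u)\le\alpha$ and $d_i(v)\le\alpha$, where $d_i(x)=|\{e_j: j>i,\ x\in e_j\}|$ is the number of edges incident to $x$ appearing after $e_i$ in $S$. Let $E_\alpha(S)$ be the set of $\alpha$-good edges of $S$ and $E_\alpha^*(S)=\max_{t\in[k]}|E_\alpha(S_t)|$, where $S_t=(e_1,\ldots,e_t)$. For disjoint consecutive segments $A,B$, $AB$ is their concatenation. A function $f$ is $2$-almost-smooth if: (1) $f(A)\ge0$ for all $A$; (2) $f(B)\le f(AB)$ for all disjoint segments $A,B$; (3) $f(A)\le\mathrm{poly}(n)$; (4) for all disjoint consecutive segments $A,B,C$ with $f(AB)\ne0$, $f(ABC)\ne0$, $\frac{f(B)}{f(AB)}\le2\cdot\frac{f(BC)}{f(ABC)}$. *)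

theory Defs
  imports Main "HOL.Real"
begin

definition stream_on :: "nat \<Rightarrow> nat set list \<Rightarrow> bool" where
  "stream_on n S \<longleftrightarrow> (\<forall>e\<in>set S. card e = 2 \<and> e \<subseteq> {1..n})"

text \<open>d_i(x): number of edges incident to x appearing strictly after position i (0-based).\<close>
definition later_deg :: "nat set list \<Rightarrow> nat \<Rightarrow> nat \<Rightarrow> nat" where
  "later_deg S i x = card {j. i < j \<and> j < length S \<and> x \<in> S ! j}"

definition good_edge :: "real \<Rightarrow> nat set list \<Rightarrow> nat \<Rightarrow> bool" where
  "good_edge \<alpha> S i \<longleftrightarrow> (\<forall>x\<in>S ! i. real (later_deg S i x) \<le> \<alpha>)"

definition good_edges :: "real \<Rightarrow> nat set list \<Rightarrow> nat set set" where
  "good_edges \<alpha> S = {S ! i | i. i < length S \<and> good_edge \<alpha> S i}"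

definition Estar :: "real \<Rightarrow> nat set list \<Rightarrow> real" where
  "Estar \<alpha> S = real (Max (insert 0 {card (good_edges \<alpha> (take t S)) | t. 1 \<le> t \<and> t \<le> length S}))"

text \<open>2-almost-smooth; segments are streams on [n], concatenation is list append.
  The poly(n) bound: constants c, d (independent of n and of the stream).\<close>
definition almost_smooth2 :: "(nat set list \<Rightarrow> real) \<Rightarrow> bool" where
  "almost_smooth2 f \<longleftrightarrow>
     (\<forall>n A. stream_on n A \<longrightarrow> f A \<ge> 0) \<and>
     (\<forall>n A B. stream_on n A \<longrightarrow> stream_on n B \<longrightarrow> f B \<le> f (A @ B)) \<and>
     (\<exists>c d::nat. \<forall>n A. stream_on n A \<longrightarrow> f A \<le> real c * real n ^ d) \<and>
     (\<forall>n A B C. stream_on n A \<longrightarrow> stream_on n B \<longrightarrow> stream_on n C \<longrightarrow>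
        f (A @ B) \<noteq> 0 \<longrightarrow> f (A @ B @ C) \<noteq> 0 \<longrightarrow>
        f B / f (A @ B) \<le> 2 * (f (B @ C) / f (A @ B @ C)))"

end

theory Submission
  imports Defs
begin

definition gc :: "real \<Rightarrow> nat set list \<Rightarrow> nat" where
  "gc \<alpha> S = card (good_edges \<alpha> S)"

definition fn :: "real \<Rightarrow> nat set list \<Rightarrow> nat" where
  "fn \<alpha> S = Max (insert 0 {card (good_edges \<alpha> (take t S)) | t. 1 \<le> t \<and> t \<le> length S})"

lemma Estar_fn: "Estar \<alpha> S = real (fn \<alpha> S)"
  by (simp add: Estar_def fn_def)

lemma good_edges_finite: "finite (good_edges \<alpha> S)"
proof -
  have "good_edges \<alpha> S \<subseteq> (\<lambda>i. S ! i) ` {..<length S}"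
    unfolding good_edges_def by auto
  then show ?thesis by (rule finite_subset) auto
qed

lemma good_edges_sub_set: "good_edges \<alpha> S \<subseteq> set S"
  unfolding good_edges_def by auto

lemma later_deg_append:
  "later_deg (X @ Y) (length X + i) x = later_deg Y i x"
proof -
  have "{j. length X + i < j \<and> j < length (X @ Y) \<and> x \<in> (X @ Y) ! j}
      = (\<lambda>j. j + length X) ` {j. i < j \<and> j < length Y \<and> x \<in> Y ! j}"
  proof (rule set_eqI, rule iffI)
    fix j assume "j \<in> {j. length X + i < j \<and> j < length (X @ Y) \<and> x \<in> (X @ Y) ! j}"
    then have h: "length X + i < j" "j < length X + length Y" "x \<in> (X @ Y) ! j" by auto
    then have "x \<in> Y ! (j - length X)" by (simp add: nth_append)
    with h show "j \<in> (\<lambda>j. j + length X) ` {j. i < j \<and> j < length Y \<and> x \<in> Y ! j}"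
      by (intro image_eqI[where x="j - length X"]) auto
  qed (auto simp: nth_append)
  then show ?thesis unfolding later_deg_def
    by (simp add: card_image inj_on_def)
qed

lemma later_deg_prefix:
  assumes "i < length X"
  shows "later_deg X i x \<le> later_deg (X @ Y) i x"
  unfolding later_deg_def
  by (rule card_mono) (auto simp: nth_append)

lemma good_edges_right: "good_edges \<alpha> Y \<subseteq> good_edges \<alpha> (X @ Y)"
proof
  fix e assume "e \<in> good_edges \<alpha> Y"
  then obtain i where i: "e = Y ! i" "i < length Y" "good_edge \<alpha> Y i"
    unfolding good_edges_def by auto
  have "(X @ Y) ! (length X + i) = e" using i by (simp add: nth_append)
  moreover have "good_edge \<alpha> (X @ Y) (length X + i)"
    using i(3) unfolding good_edge_def by (simp add: later_deg_append nth_append)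
  moreover have "length X + i < length (X @ Y)" using i by simp
  ultimately show "e \<in> good_edges \<alpha> (X @ Y)"
    unfolding good_edges_def by blast
qed

lemma good_edges_split: "good_edges \<alpha> (X @ Y) \<subseteq> good_edges \<alpha> X \<union> good_edges \<alpha> Y"
proof
  fix e assume "e \<in> good_edges \<alpha> (X @ Y)"
  then obtain i where i: "e = (X @ Y) ! i" "i < length (X @ Y)" "good_edge \<alpha> (X @ Y) i"
    unfolding good_edges_def by auto
  show "e \<in> good_edges \<alpha> X \<union> good_edges \<alpha> Y"
  proof (cases "i < length X")
    case True
    have "good_edge \<alpha> X i"
      using i(3) True unfolding good_edge_def
      by (auto simp: nth_append intro: order_trans[OF of_nat_mono[OF later_deg_prefix[OF True]]])
    then have "e \<in> good_edges \<alpha> X" using True i(1) unfolding good_edges_def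
      by (auto simp: nth_append)
    then show ?thesis by blast
  next
    case False
    define k where "k = i - length X"
    have ik: "i = length X + k" using False k_def by simp
    have "good_edge \<alpha> Y k"
      using i(3) unfolding good_edge_def ik by (simp add: later_deg_append nth_append)
    moreover have "k < length Y" using i(2) ik by simp
    moreover have "e = Y ! k" using i(1) ik by (simp add: nth_append)
    ultimately have "e \<in> good_edges \<alpha> Y" unfolding good_edges_def by blast
    then show ?thesis by blast
  qed
qed

lemma gc_split: "gc \<alpha> (X @ Y) \<le> gc \<alpha> X + gc \<alpha> Y"
proof -
  have "gc \<alpha> (X @ Y) \<le> card (good_edges \<alpha> X \<union> good_edges \<alpha> Y)"
    unfolding gc_def by (rule card_mono) (auto simp: good_edges_finite good_edges_split)
  also have "\<dots> \<le> gc \<alpha> X + gc \<alpha> Y" unfolding gc_def by (rule card_Un_le)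
  finally show ?thesis .
qed

lemma gc_right: "gc \<alpha> Y \<le> gc \<alpha> (X @ Y)"
  unfolding gc_def by (rule card_mono) (auto simp: good_edges_finite good_edges_right)

lemma gc_Nil: "gc \<alpha> [] = 0"
  by (simp add: gc_def good_edges_def)

lemma fn_finite: "finite {card (good_edges \<alpha> (take t S)) | t. 1 \<le> t \<and> t \<le> length S}"
proof -
  have "{card (good_edges \<alpha> (take t S)) | t. 1 \<le> t \<and> t \<le> length S}
     \<subseteq> (\<lambda>t. card (good_edges \<alpha> (take t S))) ` {..length S}" by auto
  then show ?thesis by (rule finite_subset) auto
qed

lemma F1: "gc \<alpha> (take t S) \<le> fn \<alpha> S"
proof (cases "t = 0")
  case True then show ?thesis by (simp add: gc_Nil)
next
  case False
  define t' where "t' = min t (length S)"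
  have "take t S = take t' S" unfolding t'_def by (simp add: min_def)
  show ?thesis
  proof (cases "S = []")
    case True then show ?thesis by (simp add: gc_Nil)
  next
    case False
    then have "1 \<le> t'" "t' \<le> length S" using \<open>t \<noteq> 0\<close> unfolding t'_def by (auto simp: Suc_le_eq)
    then have "gc \<alpha> (take t' S) \<in> insert 0 {card (good_edges \<alpha> (take t S)) | t. 1 \<le> t \<and> t \<le> length S}"
      unfolding gc_def by blast
    then have "gc \<alpha> (take t' S) \<le> fn \<alpha> S" unfolding fn_def
      using fn_finite by (intro Max_ge) auto
    then show ?thesis using \<open>take t S = take t' S\<close> by simp
  qed
qed

lemma F2: "\<exists>t. fn \<alpha> S = gc \<alpha> (take t S)"
proof -
  have "fn \<alpha> S \<in> insert 0 {card (good_edges \<alpha> (take t S)) | t. 1 \<le> t \<and> t \<le> length S}"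
    unfolding fn_def using fn_finite by (intro Max_in) auto
  then show ?thesis
  proof
    assume "fn \<alpha> S = 0" then show ?thesis by (intro exI[of _ 0]) (simp add: gc_Nil)
  next
    assume "fn \<alpha> S \<in> {card (good_edges \<alpha> (take t S)) | t. 1 \<le> t \<and> t \<le> length S}"
    then show ?thesis unfolding gc_def by blast
  qed
qed

lemma gc_le_fn: "gc \<alpha> S \<le> fn \<alpha> S"
  using F1[of \<alpha> "length S" S] by simp

lemma fn_mono: "fn \<alpha> B \<le> fn \<alpha> (A @ B)"
proof -
  obtain t where t: "fn \<alpha> B = gc \<alpha> (take t B)" using F2 by blast
  have "gc \<alpha> (take t B) \<le> gc \<alpha> (A @ take t B)" by (rule gc_right)
  also have "A @ take t B = take (length A + t) (A @ B)" by simp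
  also have "gc \<alpha> \<dots> \<le> fn \<alpha> (A @ B)" by (rule F1)
  finally show ?thesis using t by simp
qed

lemma fn_prefix: "fn \<alpha> B \<le> fn \<alpha> (B @ C)"
proof -
  obtain t where t: "fn \<alpha> B = gc \<alpha> (take t B)" using F2 by blast
  have "take t B = take (min t (length B)) (B @ C)" by (simp add: min_def)
  then show ?thesis using t F1 by metis
qed

lemma fn_sub: "fn \<alpha> (A @ B @ C) \<le> fn \<alpha> (A @ B) + fn \<alpha> (B @ C)"
proof -
  obtain t where t: "fn \<alpha> (A @ B @ C) = gc \<alpha> (take t (A @ B @ C))" using F2 by blast
  have e: "take t (A @ (B @ C)) = take t A @ take (t - length A) (B @ C)" by simp
  have "gc \<alpha> (take t A) \<le> fn \<alpha> (A @ B)"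
  proof -
    have "take t A = take (min t (length A)) (A @ B)" by (simp add: min_def)
    then show ?thesis using F1 by metis
  qed
  moreover have "gc \<alpha> (take (t - length A) (B @ C)) \<le> fn \<alpha> (B @ C)" by (rule F1)
  ultimately show ?thesis using t e gc_split[of \<alpha> "take t A" "take (t - length A) (B @ C)"]
    by simp
qed

lemma poly_bound:
  assumes "stream_on n A"
  shows "fn \<alpha> A \<le> n ^ 2"
proof -
  obtain t where t: "fn \<alpha> A = gc \<alpha> (take t A)" using F2 by blast
  have "good_edges \<alpha> (take t A) \<subseteq> {e. e \<subseteq> {1..n} \<and> card e = 2}"
    using good_edges_sub_set[of \<alpha> "take t A"] assms set_take_subset[of t A]
    unfolding stream_on_def by blast
  then have "gc \<alpha> (take t A) \<le> card {e. e \<subseteq> {1..n} \<and> card e = 2}"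
    unfolding gc_def by (intro card_mono) auto
  also have "\<dots> = n choose 2" by (simp add: n_subsets)
  also have "\<dots> \<le> n ^ 2" by (cases "2 \<le> n") (auto intro: binomial_le_pow simp: binomial_eq_0)
  finally show ?thesis using t by simp
qed

lemma arith_final:
  fixes b x y z :: real
  assumes "0 \<le> b" "b \<le> x" "b \<le> y" "z \<le> x + y" "x \<noteq> 0" "z \<noteq> 0" "0 \<le> z"
  shows "b / x \<le> 2 * (y / z)"
proof -
  have xp: "x > 0" using assms by linarith
  have zp: "z > 0" using assms by linarith
  have "b * z \<le> b * (x + y)" using assms by (simp add: mult_left_mono)
  also have "\<dots> = b * x + b * y" by (simp add: algebra_simps)
  also have "\<dots> \<le> y * x + x * y" using assms xp
    by (intro add_mono mult_right_mono mult_left_mono) auto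
  finally have "b * z \<le> 2 * y * x" by (simp add: algebra_simps)
  then show ?thesis using xp zp by (simp add: field_simps)
qed

theorem lemma3p3:
  fixes \<alpha> :: real
  assumes "\<alpha> \<ge> 1"
  shows "almost_smooth2 (Estar \<alpha>)"
  unfolding almost_smooth2_def Estar_fn
proof (intro conjI allI impI)
  show "\<exists>c d::nat. \<forall>n A. stream_on n A \<longrightarrow> real (fn \<alpha> A) \<le> real c * real n ^ d"
    apply (rule exI[of _ 1], rule exI[of _ 2])
    using poly_bound by (metis mult_1 of_nat_1 of_nat_le_iff of_nat_power)
next
  fix n A B assume "stream_on n A" "stream_on n B"
  show "real (fn \<alpha> B) \<le> real (fn \<alpha> (A @ B))" using fn_mono by simp
next
  fix n A B C
  assume "real (fn \<alpha> (A @ B)) \<noteq> 0" "real (fn \<alpha> (A @ B @ C)) \<noteq> 0"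
  then show "real (fn \<alpha> B) / real (fn \<alpha> (A @ B)) \<le> 2 * (real (fn \<alpha> (B @ C)) / real (fn \<alpha> (A @ B @ C)))"
    using fn_mono[of \<alpha> B A] fn_prefix[of \<alpha> B C] fn_sub[of \<alpha> A B C]
    by (intro arith_final) auto
qed simp

end
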